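(* Let $\mathsf{K}$ be a quasivariety, $\mathbf{B}\in\mathsf{K}$, and $\mathbf{A}\leq\mathbf{B}$ full in $\mathsf{K}$. If $\theta,\phi\in\mathrm{Con}_{\mathsf{K}}(\mathbf{B})$ satisfy $\theta\neq\phi$ and $\theta{\upharpoonright}_A=\phi{\upharpoonright}_A$, then $\theta\cap\phi=\mathrm{id}_B$.
   Context: A quasivariety is a class of similar algebras closed under isomorphic copies, subalgebras, direct products and ultraproducts. $\mathrm{Con}_{\mathsf{K}}(\mathbf{B})$ is the set of congruences $\theta$ of $\mathbf{B}$ with $\mathbf{B}/\theta\in\mathsf{K}$; $\theta{\upharpoonright}_A=\theta\cap(A\times A)$. $\mathbf{A}\leq\mathbf{B}$ is full in $\mathsf{K}$ if it is proper, almost total ($B=\mathrm{Sg}^{\mathbf{B}}(A\cup\{b\})$ for some $b\in B$), and for every $\theta\in\mathrm{Con}_{\mathsf{K}}(\mathbf{B})$ with $\theta\neq\mathrm{id}_B$ and every $b\in B$ there is $a\in A$ with $\langle a,b\rangle\in\theta$. *)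

theory Defs
  imports Main
begin

text \<open>A signature is given by an arity function ar :: 'f => nat.\<close>

record ('a, 'f) alg =
  carrier :: "'a set"
  op :: "'f \<Rightarrow> 'a list \<Rightarrow> 'a"

definition is_algebra :: "('f \<Rightarrow> nat) \<Rightarrow> ('a, 'f) alg \<Rightarrow> bool" where
  "is_algebra ar B \<longleftrightarrow>
     (\<forall>f xs. length xs = ar f \<and> set xs \<subseteq> carrier B \<longrightarrow> op B f xs \<in> carrier B)"

definition subuniverse :: "('f \<Rightarrow> nat) \<Rightarrow> ('a, 'f) alg \<Rightarrow> 'a set \<Rightarrow> bool" where
  "subuniverse ar B S \<longleftrightarrow> S \<subseteq> carrier B \<and>
     (\<forall>f xs. length xs = ar f \<and> set xs \<subseteq> S \<longrightarrow> op B f xs \<in> S)"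

definition Sg :: "('f \<Rightarrow> nat) \<Rightarrow> ('a, 'f) alg \<Rightarrow> 'a set \<Rightarrow> 'a set" where
  "Sg ar B X = \<Inter>{S. subuniverse ar B S \<and> X \<subseteq> S}"

definition congruence :: "('f \<Rightarrow> nat) \<Rightarrow> ('a, 'f) alg \<Rightarrow> 'a rel \<Rightarrow> bool" where
  "congruence ar B \<theta> \<longleftrightarrow> equiv (carrier B) \<theta> \<and>
     (\<forall>f xs ys. length xs = ar f \<and> length ys = ar f \<and>
        set xs \<subseteq> carrier B \<and> set ys \<subseteq> carrier B \<and>
        list_all2 (\<lambda>x y. (x, y) \<in> \<theta>) xs ys \<longrightarrow> (op B f xs, op B f ys) \<in> \<theta>)"

definition quot_alg :: "('a, 'f) alg \<Rightarrow> 'a rel \<Rightarrow> ('a set, 'f) alg" where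
  "quot_alg B \<theta> = \<lparr> carrier = carrier B // \<theta>,
     op = (\<lambda>f Xs. \<theta> `` {op B f (map (\<lambda>X. SOME x. x \<in> X) Xs)}) \<rparr>"

datatype 'f trm = Var nat | App 'f "'f trm list"

fun eval :: "('a, 'f) alg \<Rightarrow> (nat \<Rightarrow> 'a) \<Rightarrow> 'f trm \<Rightarrow> 'a" where
  "eval B v (Var n) = v n"
| "eval B v (App f ts) = op B f (map (eval B v) ts)"

fun wf_trm :: "('f \<Rightarrow> nat) \<Rightarrow> 'f trm \<Rightarrow> bool" where
  "wf_trm ar (Var n) = True"
| "wf_trm ar (App f ts) = (length ts = ar f \<and> (\<forall>t \<in> set ts. wf_trm ar t))"

text \<open>A quasi-identity  p1 = q1 & ... & pn = qn ==> s = t.\<close>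
type_synonym 'f qid = "('f trm \<times> 'f trm) list \<times> ('f trm \<times> 'f trm)"

definition wf_qid :: "('f \<Rightarrow> nat) \<Rightarrow> 'f qid \<Rightarrow> bool" where
  "wf_qid ar q \<longleftrightarrow> (\<forall>(p, r) \<in> set (fst q). wf_trm ar p \<and> wf_trm ar r) \<and>
     wf_trm ar (fst (snd q)) \<and> wf_trm ar (snd (snd q))"

definition satisfies :: "('a, 'f) alg \<Rightarrow> 'f qid \<Rightarrow> bool" where
  "satisfies B q \<longleftrightarrow> (\<forall>v. range v \<subseteq> carrier B \<longrightarrow>
     (\<forall>(p, r) \<in> set (fst q). eval B v p = eval B v r) \<longrightarrow>
     eval B v (fst (snd q)) = eval B v (snd (snd q)))"

text \<open>Membership in the quasivariety K = Mod(Sigma) axiomatized by the set Sigma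
  of quasi-identities.\<close>
definition in_qvar :: "('f \<Rightarrow> nat) \<Rightarrow> 'f qid set \<Rightarrow> ('a, 'f) alg \<Rightarrow> bool" where
  "in_qvar ar \<Sigma> B \<longleftrightarrow> is_algebra ar B \<and> (\<forall>q \<in> \<Sigma>. satisfies B q)"

definition Con_K :: "('f \<Rightarrow> nat) \<Rightarrow> 'f qid set \<Rightarrow> ('a, 'f) alg \<Rightarrow> 'a rel set" where
  "Con_K ar \<Sigma> B = {\<theta>. congruence ar B \<theta> \<and> in_qvar ar \<Sigma> (quot_alg B \<theta>)}"

definition restr :: "'a rel \<Rightarrow> 'a set \<Rightarrow> 'a rel" where
  "restr \<theta> A = \<theta> \<inter> (A \<times> A)"

definition full_in :: "('f \<Rightarrow> nat) \<Rightarrow> 'f qid set \<Rightarrow> 'a set \<Rightarrow> ('a, 'f) alg \<Rightarrow> bool" where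
  "full_in ar \<Sigma> A B \<longleftrightarrow>
     subuniverse ar B A \<and> A \<noteq> carrier B \<and>
     (\<exists>b \<in> carrier B. Sg ar B (A \<union> {b}) = carrier B) \<and>
     (\<forall>\<theta> \<in> Con_K ar \<Sigma> B. \<theta> \<noteq> Id_on (carrier B) \<longrightarrow>
        (\<forall>b \<in> carrier B. \<exists>a \<in> A. (a, b) \<in> \<theta>))"

end

theory Submission
  imports Defs
begin

lemma some_in_class:
  assumes "equiv S r" "X \<in> S // r"
  shows "(SOME x. x \<in> X) \<in> X" "X = r `` {SOME x. x \<in> X}" "(SOME x. x \<in> X) \<in> S"
proof -
  obtain y where y: "y \<in> S" "X = r `` {y}" using assms(2) by (auto elim: quotientE)
  have "y \<in> X" using y assms(1) by (metis equiv_class_self)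
  then show 1: "(SOME x. x \<in> X) \<in> X" by (rule someI)
  then show "X = r `` {SOME x. x \<in> X}" using y assms(1)
    by (metis equiv_class_eq_iff Image_singleton_iff)
  show "(SOME x. x \<in> X) \<in> S" using 1 assms y
    by (metis Image_singleton_iff equiv_class_eq_iff)
qed

lemma eval_carrier:
  assumes "is_algebra ar B" "range w \<subseteq> carrier B"
  shows "wf_trm ar t \<Longrightarrow> eval B w t \<in> carrier B"
proof (induction t)
  case (Var n) then show ?case using assms by auto
next
  case (App f ts)
  then have "set (map (eval B w) ts) \<subseteq> carrier B" "length (map (eval B w) ts) = ar f" by auto
  then show ?case using assms(1) unfolding is_algebra_def by simp
qed

lemma eval_quot:
  assumes "congruence ar B \<psi>" "is_algebra ar B" "range w \<subseteq> carrier B"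
    "\<forall>n. v n = \<psi> `` {w n}"
  shows "wf_trm ar t \<Longrightarrow> eval (quot_alg B \<psi>) v t = \<psi> `` {eval B w t}"
proof (induction t)
  case (Var n) then show ?case using assms by (simp add: quot_alg_def)
next
  case (App f ts)
  have eq: "equiv (carrier B) \<psi>" using assms(1) unfolding congruence_def by auto
  have IH: "\<forall>t\<in>set ts. eval (quot_alg B \<psi>) v t = \<psi> `` {eval B w t}" using App by auto
  have car: "\<forall>t\<in>set ts. eval B w t \<in> carrier B" using App eval_carrier[OF assms(2,3)] by auto
  let ?xs = "map (\<lambda>X. SOME x. x \<in> X) (map (eval (quot_alg B \<psi>) v) ts)"
  let ?ys = "map (eval B w) ts"
  have cls: "\<forall>t\<in>set ts. \<psi> `` {eval B w t} \<in> carrier B // \<psi>" using car by (auto intro: quotientI)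
  have xs_eq: "?xs = map (\<lambda>t. SOME x. x \<in> \<psi> `` {eval B w t}) ts" using IH by simp
  have rel: "\<forall>t\<in>set ts. (SOME x. x \<in> \<psi> `` {eval B w t}) \<in> carrier B \<and>
      ((SOME x. x \<in> \<psi> `` {eval B w t}), eval B w t) \<in> \<psi>"
  proof
    fix t assume t: "t \<in> set ts"
    have "(SOME x. x \<in> \<psi> `` {eval B w t}) \<in> \<psi> `` {eval B w t}"
      using some_in_class(1)[OF eq] cls t by blast
    then show "(SOME x. x \<in> \<psi> `` {eval B w t}) \<in> carrier B \<and>
      ((SOME x. x \<in> \<psi> `` {eval B w t}), eval B w t) \<in> \<psi>"
      using eq unfolding equiv_def sym_def refl_on_def by auto
  qed
  have "list_all2 (\<lambda>x y. (x, y) \<in> \<psi>) ?xs ?ys"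
    unfolding xs_eq using rel by (simp add: list_all2_map1 list_all2_map2 list_all2_same)
  moreover have "set ?xs \<subseteq> carrier B" unfolding xs_eq using rel by auto
  moreover have "set ?ys \<subseteq> carrier B" using car by auto
  ultimately have "(op B f ?xs, op B f ?ys) \<in> \<psi>"
    using assms(1) App.prems unfolding congruence_def by auto
  then have "\<psi> `` {op B f ?xs} = \<psi> `` {op B f ?ys}" using eq by (simp add: equiv_class_eq)
  then show ?case by (simp add: quot_alg_def)
qed

lemma sat_quot_iff:
  assumes "congruence ar B \<psi>" "is_algebra ar B" "wf_qid ar q"
  shows "satisfies (quot_alg B \<psi>) q \<longleftrightarrow> (\<forall>w. range w \<subseteq> carrier B \<longrightarrow>
     (\<forall>(p, r) \<in> set (fst q). (eval B w p, eval B w r) \<in> \<psi>) \<longrightarrow>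
     (eval B w (fst (snd q)), eval B w (snd (snd q))) \<in> \<psi>)"
proof -
  have eq: "equiv (carrier B) \<psi>" using assms(1) unfolding congruence_def by auto
  have wf: "\<forall>(p, r) \<in> set (fst q). wf_trm ar p \<and> wf_trm ar r"
     "wf_trm ar (fst (snd q))" "wf_trm ar (snd (snd q))" using assms(3) unfolding wf_qid_def by auto
  have key: "(eval (quot_alg B \<psi>) (\<lambda>n. \<psi> `` {w n}) t = eval (quot_alg B \<psi>) (\<lambda>n. \<psi> `` {w n}) u)
       \<longleftrightarrow> (eval B w t, eval B w u) \<in> \<psi>"
    if h: "range w \<subseteq> carrier B" "wf_trm ar t" "wf_trm ar u" for w t u
  proof -
    show ?thesis
      using eval_quot[OF assms(1,2) h(1), of "\<lambda>n. \<psi> `` {w n}"] h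
        eval_carrier[OF assms(2) h(1)] eq_equiv_class_iff[OF eq] by auto
  qed
  show ?thesis
  proof
    assume S: "satisfies (quot_alg B \<psi>) q"
    show "\<forall>w. range w \<subseteq> carrier B \<longrightarrow>
     (\<forall>(p, r) \<in> set (fst q). (eval B w p, eval B w r) \<in> \<psi>) \<longrightarrow>
     (eval B w (fst (snd q)), eval B w (snd (snd q))) \<in> \<psi>"
    proof (intro allI impI)
      fix w assume w: "range w \<subseteq> carrier B"
        and H: "\<forall>(p, r) \<in> set (fst q). (eval B w p, eval B w r) \<in> \<psi>"
      have r: "range (\<lambda>n. \<psi> `` {w n}) \<subseteq> carrier (quot_alg B \<psi>)"
        using w by (auto simp: quot_alg_def intro: quotientI)
      have "\<forall>(p, r) \<in> set (fst q). eval (quot_alg B \<psi>) (\<lambda>n. \<psi> `` {w n}) p = eval (quot_alg B \<psi>) (\<lambda>n. \<psi> `` {w n}) r"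
        using H wf(1) key[OF w] by fastforce
      then have "eval (quot_alg B \<psi>) (\<lambda>n. \<psi> `` {w n}) (fst (snd q)) = eval (quot_alg B \<psi>) (\<lambda>n. \<psi> `` {w n}) (snd (snd q))"
        using S r unfolding satisfies_def by blast
      then show "(eval B w (fst (snd q)), eval B w (snd (snd q))) \<in> \<psi>"
        using key[OF w wf(2,3)] by simp
    qed
  next
    assume R: "\<forall>w. range w \<subseteq> carrier B \<longrightarrow>
     (\<forall>(p, r) \<in> set (fst q). (eval B w p, eval B w r) \<in> \<psi>) \<longrightarrow>
     (eval B w (fst (snd q)), eval B w (snd (snd q))) \<in> \<psi>"
    show "satisfies (quot_alg B \<psi>) q"
      unfolding satisfies_def
    proof (intro allI impI)
      fix v assume v: "range v \<subseteq> carrier (quot_alg B \<psi>)"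
        and H: "\<forall>(p, r)\<in>set (fst q). eval (quot_alg B \<psi>) v p = eval (quot_alg B \<psi>) v r"
      define w where "w n = (SOME x. x \<in> v n)" for n
      have vn: "v n \<in> carrier B // \<psi>" for n using v by (auto simp: quot_alg_def)
      have w: "range w \<subseteq> carrier B" using some_in_class(3)[OF eq vn] unfolding w_def by auto
      have vw: "v = (\<lambda>n. \<psi> `` {w n})" using some_in_class(2)[OF eq vn] unfolding w_def by auto
      have "\<forall>(p, r) \<in> set (fst q). (eval B w p, eval B w r) \<in> \<psi>"
        using H wf(1) key[OF w] unfolding vw by fastforce
      then have "(eval B w (fst (snd q)), eval B w (snd (snd q))) \<in> \<psi>" using R w by blast
      then show "eval (quot_alg B \<psi>) v (fst (snd q)) = eval (quot_alg B \<psi>) v (snd (snd q))"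
        using key[OF w wf(2,3)] unfolding vw by simp
    qed
  qed
qed

lemma quot_is_algebra:
  assumes "congruence ar B \<psi>" "is_algebra ar B"
  shows "is_algebra ar (quot_alg B \<psi>)"
  unfolding is_algebra_def
proof (intro allI impI)
  fix f xs assume h: "length xs = ar f \<and> set xs \<subseteq> carrier (quot_alg B \<psi>)"
  have eq: "equiv (carrier B) \<psi>" using assms(1) unfolding congruence_def by auto
  have "set (map (\<lambda>X. SOME x. x \<in> X) xs) \<subseteq> carrier B"
    using h some_in_class(3)[OF eq] by (auto simp: quot_alg_def)
  then have "op B f (map (\<lambda>X. SOME x. x \<in> X) xs) \<in> carrier B"
    using assms(2) h unfolding is_algebra_def by auto
  then show "op (quot_alg B \<psi>) f xs \<in> carrier (quot_alg B \<psi>)"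
    by (auto simp: quot_alg_def intro: quotientI)
qed

lemma inter_cong:
  assumes "congruence ar B \<theta>" "congruence ar B \<phi>"
  shows "congruence ar B (\<theta> \<inter> \<phi>)"
  using assms unfolding congruence_def
proof (intro conjI allI impI)
  have e1: "equiv (carrier B) \<theta>" and e2: "equiv (carrier B) \<phi>"
    using assms unfolding congruence_def by auto
  have "refl_on (carrier B \<inter> carrier B) (\<theta> \<inter> \<phi>)"
    using e1 e2 by (intro refl_on_Int) (auto elim: equivE)
  moreover have "sym (\<theta> \<inter> \<phi>)" using e1 e2 by (intro sym_Int) (auto elim: equivE)
  moreover have "trans (\<theta> \<inter> \<phi>)" using e1 e2 by (intro trans_Int) (auto elim: equivE)
  ultimately show "equiv (carrier B) (\<theta> \<inter> \<phi>)" using equiv_type[OF e1] by (auto simp add: equiv_def)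
next
  fix f xs ys
  assume h: "length xs = ar f \<and> length ys = ar f \<and> set xs \<subseteq> carrier B \<and> set ys \<subseteq> carrier B \<and>
       list_all2 (\<lambda>x y. (x, y) \<in> \<theta> \<inter> \<phi>) xs ys"
  have "list_all2 (\<lambda>x y. (x, y) \<in> \<theta>) xs ys" "list_all2 (\<lambda>x y. (x, y) \<in> \<phi>) xs ys"
    using h list_all2_mono by fastforce+
  then show "(op B f xs, op B f ys) \<in> \<theta> \<inter> \<phi>" using assms h unfolding congruence_def by auto
qed

lemma inter_ConK:
  assumes "\<forall>q \<in> \<Sigma>. wf_qid ar q" "in_qvar ar \<Sigma> B"
    "\<theta> \<in> Con_K ar \<Sigma> B" "\<phi> \<in> Con_K ar \<Sigma> B"
  shows "\<theta> \<inter> \<phi> \<in> Con_K ar \<Sigma> B"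
proof -
  have ct: "congruence ar B \<theta>" and cp: "congruence ar B \<phi>"
    and st: "\<forall>q\<in>\<Sigma>. satisfies (quot_alg B \<theta>) q" and sp: "\<forall>q\<in>\<Sigma>. satisfies (quot_alg B \<phi>) q"
    using assms(3,4) unfolding Con_K_def in_qvar_def by auto
  have alg: "is_algebra ar B" using assms(2) unfolding in_qvar_def by auto
  have ci: "congruence ar B (\<theta> \<inter> \<phi>)" using inter_cong[OF ct cp] .
  have "\<forall>q\<in>\<Sigma>. satisfies (quot_alg B (\<theta> \<inter> \<phi>)) q"
  proof
    fix q assume q: "q \<in> \<Sigma>"
    have wq: "wf_qid ar q" using assms(1) q by auto
    show "satisfies (quot_alg B (\<theta> \<inter> \<phi>)) q"
      unfolding sat_quot_iff[OF ci alg wq]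
    proof (intro allI impI)
      fix w
      assume w: "range w \<subseteq> carrier B"
        and H: "\<forall>(p, r)\<in>set (fst q). (eval B w p, eval B w r) \<in> \<theta> \<inter> \<phi>"
      have H1: "\<forall>(p, r)\<in>set (fst q). (eval B w p, eval B w r) \<in> \<theta>" using H by auto
      have H2: "\<forall>(p, r)\<in>set (fst q). (eval B w p, eval B w r) \<in> \<phi>" using H by auto
      have "(eval B w (fst (snd q)), eval B w (snd (snd q))) \<in> \<theta>"
        using st[rule_format, OF q] unfolding sat_quot_iff[OF ct alg wq] using w H1 by blast
      moreover have "(eval B w (fst (snd q)), eval B w (snd (snd q))) \<in> \<phi>"
        using sp[rule_format, OF q] unfolding sat_quot_iff[OF cp alg wq] using w H2 by blast
      ultimately show "(eval B w (fst (snd q)), eval B w (snd (snd q))) \<in> \<theta> \<inter> \<phi>" by blast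
    qed
  qed
  then show ?thesis using ci quot_is_algebra[OF ci alg]
    unfolding Con_K_def in_qvar_def by auto
qed

theorem mainTheorem5:
  fixes ar :: "'f \<Rightarrow> nat" and \<Sigma> :: "'f qid set"
    and B :: "('a, 'f) alg" and A :: "'a set" and \<theta> \<phi> :: "'a rel"
  assumes "\<forall>q \<in> \<Sigma>. wf_qid ar q"
    and "in_qvar ar \<Sigma> B"
    and "full_in ar \<Sigma> A B"
    and "\<theta> \<in> Con_K ar \<Sigma> B" and "\<phi> \<in> Con_K ar \<Sigma> B"
    and "\<theta> \<noteq> \<phi>"
    and "restr \<theta> A = restr \<phi> A"
  shows "\<theta> \<inter> \<phi> = Id_on (carrier B)"
proof (rule ccontr)
  assume ne: "\<theta> \<inter> \<phi> \<noteq> Id_on (carrier B)"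
  have I: "\<theta> \<inter> \<phi> \<in> Con_K ar \<Sigma> B" using inter_ConK[OF assms(1,2,4,5)] .
  have sub: "subuniverse ar B A" using assms(3) unfolding full_in_def by auto
  have AB: "A \<subseteq> carrier B" using sub unfolding subuniverse_def by auto
  have cl: "\<forall>b \<in> carrier B. \<exists>a \<in> A. (a, b) \<in> \<theta> \<inter> \<phi>"
  proof -
    have F: "\<forall>\<theta> \<in> Con_K ar \<Sigma> B. \<theta> \<noteq> Id_on (carrier B) \<longrightarrow>
        (\<forall>b \<in> carrier B. \<exists>a \<in> A. (a, b) \<in> \<theta>)"
      using assms(3) unfolding full_in_def by (elim conjE)
    show ?thesis by (rule mp[OF bspec[OF F I] ne])
  qed
  have et: "equiv (carrier B) \<theta>" and ep: "equiv (carrier B) \<phi>"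
    using assms(4,5) unfolding Con_K_def congruence_def by auto
  have R: "\<theta> \<inter> A \<times> A = \<phi> \<inter> A \<times> A" using assms(7) unfolding restr_def .
  have "\<theta> \<subseteq> \<phi>"
  proof
    fix x assume x: "x \<in> \<theta>"
    obtain b c where bc: "x = (b, c)" by (cases x)
    have bcB: "b \<in> carrier B" "c \<in> carrier B" using x bc et unfolding equiv_def refl_on_def by auto
    obtain a where a: "a \<in> A" "(a, b) \<in> \<theta> \<inter> \<phi>" using cl bcB by blast
    obtain a' where a': "a' \<in> A" "(a', c) \<in> \<theta> \<inter> \<phi>" using cl bcB by blast
    have "(a, a') \<in> \<theta>" using a a' x bc et by (meson IntD1 equivE symD transD)
    then have "(a, a') \<in> \<phi>" using R a a' by blast
    then show "x \<in> \<phi>" using a a' bc ep by (meson IntD2 equivE symD transD)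
  qed
  moreover have "\<phi> \<subseteq> \<theta>"
  proof
    fix x assume x: "x \<in> \<phi>"
    obtain b c where bc: "x = (b, c)" by (cases x)
    have bcB: "b \<in> carrier B" "c \<in> carrier B" using x bc ep unfolding equiv_def refl_on_def by auto
    obtain a where a: "a \<in> A" "(a, b) \<in> \<theta> \<inter> \<phi>" using cl bcB by blast
    obtain a' where a': "a' \<in> A" "(a', c) \<in> \<theta> \<inter> \<phi>" using cl bcB by blast
    have "(a, a') \<in> \<phi>" using a a' x bc ep by (meson IntD2 equivE symD transD)
    then have "(a, a') \<in> \<theta>" using R a a' by blast
    then show "x \<in> \<theta>" using a a' bc et by (meson IntD1 equivE symD transD)
  qed
  ultimately have "\<theta> = \<phi>" by (rule subset_antisym)
  then show False using assms(6) by simp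
qed

end
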